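(* Let $n\ge 2$ and $c\ge1$ be integers, and let $e_{n,c}$ be the order of $b^{-n}a^{-n}(ab)^{n}$ in $M(R(2,n;c))$. If $G$ is any finite group of exponent $n$ that is nilpotent of class at most $c$, then the exponent of $M(G)$ divides $n\,e_{n,c}$.
   Context: $R(2,n)$ denotes the largest finite $2$-generator group of exponent $n$, and $R(2,n;c)$ denotes its largest quotient of nilpotency class at most $c$ (equivalently the largest $2$-generator group of exponent $n$ and class at most $c$). Write $R(2,n;c)=F/R$ with $F$ free on $a,b$. The Schur multiplier is given by Hopf's formula $M(G)=(R\cap F')/[F,R]$ for $G=F/R$, $F$ free; $b^{-n}a^{-n}(ab)^n[F,R]$ lies in $M(R(2,n;c))$. *)

theory Defs
  imports "HOL-Algebra.Algebra"
begin

text \<open>A letter (True, x) stands for the generator x, (False, x) for its inverse.\<close>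

definition fg_red1 :: "(bool \<times> 'x) list \<Rightarrow> (bool \<times> 'x) list \<Rightarrow> bool" where
  "fg_red1 u v \<longleftrightarrow> (\<exists>xs ys b x. u = xs @ [(b, x), (\<not> b, x)] @ ys \<and> v = xs @ ys)"

definition fg_class :: "(bool \<times> 'x) list \<Rightarrow> (bool \<times> 'x) list set" where
  "fg_class w = {v. equivclp fg_red1 w v}"

definition free_group :: "'x set \<Rightarrow> ((bool \<times> 'x) list set) monoid" where
  "free_group S = \<lparr> carrier = {fg_class w | w. snd ` set w \<subseteq> S},
     monoid.mult = (\<lambda>A B. fg_class ((SOME u. u \<in> A) @ (SOME v. v \<in> B))),
     one = fg_class [] \<rparr>"

definition fg_gen :: "'x \<Rightarrow> (bool \<times> 'x) list set" where
  "fg_gen x = fg_class [(True, x)]"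

definition word_eval :: "('g, 'm) monoid_scheme \<Rightarrow> ('x \<Rightarrow> 'g) \<Rightarrow> (bool \<times> 'x) list \<Rightarrow> 'g" where
  "word_eval G f w = foldr (\<lambda>(b, x) acc. (if b then f x else inv\<^bsub>G\<^esub> (f x)) \<otimes>\<^bsub>G\<^esub> acc) w \<one>\<^bsub>G\<^esub>"

definition free_lift :: "'x set \<Rightarrow> ('g, 'm) monoid_scheme \<Rightarrow> ('x \<Rightarrow> 'g) \<Rightarrow> (bool \<times> 'x) list set \<Rightarrow> 'g" where
  "free_lift S G f A = word_eval G f (SOME w. w \<in> A \<and> snd ` set w \<subseteq> S)"

definition comm_subgroup :: "('a, 'b) monoid_scheme \<Rightarrow> 'a set \<Rightarrow> 'a set \<Rightarrow> 'a set" where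
  "comm_subgroup G H K = generate G
     (\<Union>h \<in> H. \<Union>k \<in> K. {h \<otimes>\<^bsub>G\<^esub> k \<otimes>\<^bsub>G\<^esub> inv\<^bsub>G\<^esub> h \<otimes>\<^bsub>G\<^esub> inv\<^bsub>G\<^esub> k})"

text \<open>lower_central G i is gamma_(i+1)(G): gamma_1 = G, gamma_(i+1) = [gamma_i, G].\<close>
fun lower_central :: "('a, 'b) monoid_scheme \<Rightarrow> nat \<Rightarrow> 'a set" where
  "lower_central G 0 = carrier G"
| "lower_central G (Suc i) = comm_subgroup G (lower_central G i) (carrier G)"

definition nilpotent_class_le :: "('a, 'b) monoid_scheme \<Rightarrow> nat \<Rightarrow> bool" where
  "nilpotent_class_le G c \<longleftrightarrow> lower_central G c = {\<one>\<^bsub>G\<^esub>}"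

definition has_exponent :: "('a, 'b) monoid_scheme \<Rightarrow> nat \<Rightarrow> bool" where
  "has_exponent G n \<longleftrightarrow> (\<forall>x \<in> carrier G. x [^]\<^bsub>G\<^esub> n = \<one>\<^bsub>G\<^esub>)"

text \<open>For a presentation G = F/R: M = (R \<inter> F') / [F,R].\<close>
definition hopf_mult :: "('a, 'b) monoid_scheme \<Rightarrow> 'a set \<Rightarrow> ('a set) monoid" where
  "hopf_mult F R = (F\<lparr>carrier := R \<inter> derived F (carrier F)\<rparr>) Mod (comm_subgroup F (carrier F) R)"

definition schur_mult :: "('g, 'm) monoid_scheme \<Rightarrow> ((bool \<times> 'g) list set) set monoid" where
  "schur_mult G = hopf_mult (free_group (carrier G))
      (kernel (free_group (carrier G)) G (free_lift (carrier G) G (\<lambda>x. x)))"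

text \<open>F = free group on a = fg_gen True, b = fg_gen False.
  The relation subgroup of R(2,n;c) is the verbal subgroup generated by all n-th powers
  and gamma_(c+1)(F).\<close>
definition F2 :: "((bool \<times> bool) list set) monoid" where
  "F2 = free_group (UNIV :: bool set)"

definition R2nc_rel :: "nat \<Rightarrow> nat \<Rightarrow> (bool \<times> bool) list set set" where
  "R2nc_rel n c = generate F2 ({x [^]\<^bsub>F2\<^esub> n | x. x \<in> carrier F2} \<union> lower_central F2 c)"

definition gen_a :: "(bool \<times> bool) list set" where "gen_a = fg_gen True"
definition gen_b :: "(bool \<times> bool) list set" where "gen_b = fg_gen False"

definition hopf_word :: "nat \<Rightarrow> (bool \<times> bool) list set" where
  "hopf_word n = inv\<^bsub>F2\<^esub> (gen_b [^]\<^bsub>F2\<^esub> n) \<otimes>\<^bsub>F2\<^esub> inv\<^bsub>F2\<^esub> (gen_a [^]\<^bsub>F2\<^esub> n)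
       \<otimes>\<^bsub>F2\<^esub> ((gen_a \<otimes>\<^bsub>F2\<^esub> gen_b) [^]\<^bsub>F2\<^esub> n)"

definition e_nc :: "nat \<Rightarrow> nat \<Rightarrow> nat" where
  "e_nc n c = group.ord (hopf_mult F2 (R2nc_rel n c))
      (comm_subgroup F2 (carrier F2) (R2nc_rel n c) #>\<^bsub>F2\<^esub> hopf_word n)"

end

theory Submission
  imports Defs
begin



abbreviation "FE \<equiv> equivclp fg_red1"

lemma mem_fg_class: "v \<in> fg_class u \<longleftrightarrow> FE u v"
  by (simp add: fg_class_def)

lemma fg_class_eq: "fg_class u = fg_class v \<longleftrightarrow> FE u v"
proof
  assume "fg_class u = fg_class v"
  then have "v \<in> fg_class u" by (simp add: mem_fg_class)
  then show "FE u v" by (simp add: mem_fg_class)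
next
  assume h: "FE u v"
  have "\<And>w. FE u w \<longleftrightarrow> FE v w"
    using h equivclp_sym transp_equivclp transpD by metis
  then show "fg_class u = fg_class v" unfolding fg_class_def by (intro arg_cong[where f=Collect] ext) blast
qed

lemma equivclp_map:
  assumes "\<And>a b. r a b \<Longrightarrow> r (g a) (g b)" and "equivclp r a b"
  shows "equivclp r (g a) (g b)"
proof -
  have "(symclp r)\<^sup>*\<^sup>* a b" using assms(2) by (simp add: equivclp_def)
  then have "(symclp r)\<^sup>*\<^sup>* (g a) (g b)"
  proof (induction rule: rtranclp_induct)
    case base then show ?case by simp
  next
    case (step y z)
    then have "symclp r (g y) (g z)" using assms(1) by (auto simp: symclp_def)
    then show ?case using step by (meson rtranclp.rtrancl_into_rtrancl)
  qed
  then show ?thesis by (simp add: equivclp_def)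
qed

lemma fg_red1_ctx: "fg_red1 u v \<Longrightarrow> fg_red1 (p @ u @ q) (p @ v @ q)"
  unfolding fg_red1_def
  by (metis append.assoc)

lemma FE_ctx: "FE u v \<Longrightarrow> FE (p @ u @ q) (p @ v @ q)"
  by (rule equivclp_map[where g="\<lambda>w. p @ w @ q"]) (auto intro: fg_red1_ctx)

lemma FE_trans: "FE a b \<Longrightarrow> FE b c \<Longrightarrow> FE a c"
  by (meson transp_equivclp transpD)

lemma FE_refl: "FE a a" by simp

lemma FE_app: "FE u u' \<Longrightarrow> FE v v' \<Longrightarrow> FE (u @ v) (u' @ v')"
proof -
  assume a: "FE u u'" "FE v v'"
  have "FE ([] @ u @ v) ([] @ u' @ v)" by (rule FE_ctx[OF a(1)])
  moreover have "FE (u' @ v @ []) (u' @ v' @ [])" by (rule FE_ctx[OF a(2)])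
  ultimately show ?thesis by (auto intro: FE_trans)
qed

definition inv_w :: "(bool \<times> 'x) list \<Rightarrow> (bool \<times> 'x) list" where
  "inv_w w = rev (map (\<lambda>(b, x). (\<not> b, x)) w)"

lemma inv_w_inv_w [simp]: "inv_w (inv_w w) = w"
  by (induction w) (auto simp: inv_w_def)

lemma inv_w_set [simp]: "snd ` set (inv_w w) = snd ` set w"
  by (induction w) (auto simp: inv_w_def)

lemma FE_r_inv: "FE (w @ inv_w w) []"
proof (induction w)
  case Nil then show ?case by (simp add: inv_w_def)
next
  case (Cons a w)
  obtain b x where a: "a = (b, x)" by (cases a)
  have eq: "(a # w) @ inv_w (a # w) = [a] @ (w @ inv_w w) @ [(\<not> b, x)]"
    by (simp add: inv_w_def a)
  have "FE ([a] @ (w @ inv_w w) @ [(\<not> b, x)]) ([a] @ [] @ [(\<not> b, x)])"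
    by (rule FE_ctx[OF Cons])
  moreover have "fg_red1 ([a] @ [] @ [(\<not> b, x)]) []"
    unfolding fg_red1_def a by (rule exI[of _ "[]"], rule exI[of _ "[]"], auto)
  then have "FE ([a] @ [] @ [(\<not> b, x)]) []" by (simp add: equivclp_def symclp_def r_into_rtranclp)
  ultimately show ?case unfolding eq by (rule FE_trans)
qed

lemma FE_l_inv: "FE (inv_w w @ w) []"
  using FE_r_inv[of "inv_w w"] by simp

lemma fg_mult: "fg_class u \<otimes>\<^bsub>free_group S\<^esub> fg_class v = fg_class (u @ v)"
proof -
  have u: "(SOME u'. u' \<in> fg_class u) \<in> fg_class u" by (rule someI[of _ u]) (simp add: mem_fg_class)
  have v: "(SOME v'. v' \<in> fg_class v) \<in> fg_class v" by (rule someI[of _ v]) (simp add: mem_fg_class)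
  have "FE ((SOME u'. u' \<in> fg_class u) @ (SOME v'. v' \<in> fg_class v)) (u @ v)"
    using u v unfolding mem_fg_class by (metis FE_app equivclp_sym)
  then show ?thesis
    unfolding free_group_def by (simp add: fg_class_eq)
qed

lemma fg_one: "\<one>\<^bsub>free_group S\<^esub> = fg_class []"
  by (simp add: free_group_def)

lemma fg_carrier: "carrier (free_group S) = {fg_class w | w. snd ` set w \<subseteq> S}"
  by (simp add: free_group_def)

lemma fg_carrierE:
  assumes "A \<in> carrier (free_group S)"
  obtains w where "A = fg_class w" "snd ` set w \<subseteq> S"
  using assms by (auto simp: fg_carrier)

lemma fg_carrierI: "snd ` set w \<subseteq> S \<Longrightarrow> fg_class w \<in> carrier (free_group S)"
  by (auto simp: fg_carrier)

lemma free_group_is_group: "group (free_group S)"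
proof (rule groupI)
  fix x y assume "x \<in> carrier (free_group S)" "y \<in> carrier (free_group S)"
  then obtain u v where u: "x = fg_class u" "snd ` set u \<subseteq> S"
    and v: "y = fg_class v" "snd ` set v \<subseteq> S" unfolding fg_carrier by blast
  have "snd ` set (u @ v) \<subseteq> S" using u v by auto
  then show "x \<otimes>\<^bsub>free_group S\<^esub> y \<in> carrier (free_group S)"
    unfolding u v fg_mult by (rule fg_carrierI)
next
  show "\<one>\<^bsub>free_group S\<^esub> \<in> carrier (free_group S)"
    unfolding fg_one by (rule fg_carrierI) simp
next
  fix x y z assume "x \<in> carrier (free_group S)" "y \<in> carrier (free_group S)" "z \<in> carrier (free_group S)"
  then obtain u v w where "x = fg_class u" "y = fg_class v" "z = fg_class w" unfolding fg_carrier by blast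
  then show "x \<otimes>\<^bsub>free_group S\<^esub> y \<otimes>\<^bsub>free_group S\<^esub> z = x \<otimes>\<^bsub>free_group S\<^esub> (y \<otimes>\<^bsub>free_group S\<^esub> z)"
    by (simp add: fg_mult)
next
  fix x assume "x \<in> carrier (free_group S)"
  then obtain u where "x = fg_class u" unfolding fg_carrier by blast
  then show "\<one>\<^bsub>free_group S\<^esub> \<otimes>\<^bsub>free_group S\<^esub> x = x"
    by (simp add: fg_mult fg_one)
next
  fix x assume "x \<in> carrier (free_group S)"
  then obtain w where w: "x = fg_class w" "snd ` set w \<subseteq> S" by (rule fg_carrierE)
  have c: "fg_class (inv_w w) \<in> carrier (free_group S)"
    by (rule fg_carrierI) (simp add: w(2))
  have "fg_class (inv_w w) \<otimes>\<^bsub>free_group S\<^esub> x = \<one>\<^bsub>free_group S\<^esub>"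
    unfolding w fg_mult fg_one fg_class_eq by (rule FE_l_inv)
  then show "\<exists>y\<in>carrier (free_group S). y \<otimes>\<^bsub>free_group S\<^esub> x = \<one>\<^bsub>free_group S\<^esub>"
    using c by blast
qed

lemma word_eval_Nil [simp]: "word_eval G f [] = \<one>\<^bsub>G\<^esub>"
  by (simp add: word_eval_def)

lemma word_eval_Cons [simp]:
  "word_eval G f ((b, x) # w) = (if b then f x else inv\<^bsub>G\<^esub> (f x)) \<otimes>\<^bsub>G\<^esub> word_eval G f w"
  by (simp add: word_eval_def)

context group
begin

lemma word_eval_closed:
  assumes "\<And>x. x \<in> snd ` set w \<Longrightarrow> f x \<in> carrier G"
  shows "word_eval G f w \<in> carrier G"
  using assms by (induction w) auto

lemma word_eval_append:
  assumes "\<And>x. x \<in> snd ` set (u @ v) \<Longrightarrow> f x \<in> carrier G"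
  shows "word_eval G f (u @ v) = word_eval G f u \<otimes> word_eval G f v"
  using assms
proof (induction u)
  case Nil then show ?case using word_eval_closed[of v f] by auto
next
  case (Cons a u)
  obtain b x where a: "a = (b, x)" by (cases a)
  have c: "f x \<in> carrier G" using Cons.prems a by auto
  have cu: "word_eval G f u \<in> carrier G" using Cons.prems by (intro word_eval_closed) auto
  have cv: "word_eval G f v \<in> carrier G" using Cons.prems by (intro word_eval_closed) auto
  show ?case using Cons a c cu cv by (auto simp: m_assoc)
qed

lemma word_eval_red1:
  assumes "\<And>x. f x \<in> carrier G" and "fg_red1 u v"
  shows "word_eval G f u = word_eval G f v"
proof -
  obtain xs ys b x where u: "u = xs @ [(b, x), (\<not> b, x)] @ ys" and v: "v = xs @ ys"
    using assms(2) unfolding fg_red1_def by blast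
  have cy: "word_eval G f ys \<in> carrier G" by (intro word_eval_closed assms(1))
  have "word_eval G f ([(b, x), (\<not> b, x)] @ ys) = word_eval G f ys"
    using assms(1)[of x] cy by (cases b) (auto simp: m_assoc[symmetric])
  then show ?thesis unfolding u v using assms(1)
    by (simp add: word_eval_append)
qed

lemma word_eval_FE:
  assumes "\<And>x. f x \<in> carrier G" and "FE u v"
  shows "word_eval G f u = word_eval G f v"
proof -
  have "(symclp fg_red1)\<^sup>*\<^sup>* u v" using assms(2) by (simp add: equivclp_def)
  then show ?thesis
  proof (induction rule: rtranclp_induct)
    case base then show ?case by simp
  next
    case (step y z)
    have r: "\<And>a b. fg_red1 a b \<Longrightarrow> word_eval G f a = word_eval G f b"
      using word_eval_red1 assms(1) by blast
    then show ?case using step by (auto simp: symclp_def)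
  qed
qed

lemma word_eval_restrict:
  assumes "snd ` set w \<subseteq> S"
  shows "word_eval G (\<lambda>x. if x \<in> S then f x else \<one>) w = word_eval G f w"
  using assms by (induction w) auto

lemma free_lift_class:
  assumes f: "f \<in> S \<rightarrow> carrier G" and w: "snd ` set w \<subseteq> S"
  shows "free_lift S G f (fg_class w) = word_eval G f w"
proof -
  define w' where "w' = (SOME w'. w' \<in> fg_class w \<and> snd ` set w' \<subseteq> S)"
  have "w' \<in> fg_class w \<and> snd ` set w' \<subseteq> S"
    unfolding w'_def by (rule someI[of _ w]) (simp add: mem_fg_class w)
  then have e: "FE w w'" and w': "snd ` set w' \<subseteq> S" by (auto simp: mem_fg_class)
  let ?g = "\<lambda>x. if x \<in> S then f x else \<one>"
  have g: "\<And>x. ?g x \<in> carrier G" using f by auto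
  have "word_eval G f w' = word_eval G ?g w'" using word_eval_restrict[OF w'] by simp
  also have "\<dots> = word_eval G ?g w" using word_eval_FE[OF g equivclp_sym[OF e]] .
  also have "\<dots> = word_eval G f w" using word_eval_restrict[OF w] .
  finally show ?thesis unfolding free_lift_def w'_def[symmetric] by simp
qed

lemma free_lift_hom:
  assumes f: "f \<in> S \<rightarrow> carrier G"
  shows "free_lift S G f \<in> hom (free_group S) G"
proof (rule homI)
  fix A assume "A \<in> carrier (free_group S)"
  then obtain w where w: "A = fg_class w" "snd ` set w \<subseteq> S" by (rule fg_carrierE)
  show "free_lift S G f A \<in> carrier G"
    using w f by (auto simp: free_lift_class intro!: word_eval_closed)
next
  fix A B assume "A \<in> carrier (free_group S)" "B \<in> carrier (free_group S)"
  then obtain u v where u: "A = fg_class u" "snd ` set u \<subseteq> S"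
    and v: "B = fg_class v" "snd ` set v \<subseteq> S" unfolding fg_carrier by blast
  have uv: "snd ` set (u @ v) \<subseteq> S" using u v by auto
  show "free_lift S G f (A \<otimes>\<^bsub>free_group S\<^esub> B) = free_lift S G f A \<otimes> free_lift S G f B"
  proof -
    have fc: "\<And>x. x \<in> snd ` set (u @ v) \<Longrightarrow> f x \<in> carrier G" using uv f by (meson Pi_mem subsetD)
    have "free_lift S G f (A \<otimes>\<^bsub>free_group S\<^esub> B) = word_eval G f (u @ v)"
      unfolding u v fg_mult by (rule free_lift_class[OF f uv])
    also have "\<dots> = word_eval G f u \<otimes> word_eval G f v" by (rule word_eval_append[OF fc])
    also have "\<dots> = free_lift S G f A \<otimes> free_lift S G f B"
      unfolding u v using free_lift_class[OF f u(2)] free_lift_class[OF f v(2)] by simp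
    finally show ?thesis .
  qed
qed

lemma free_lift_gen:
  assumes f: "f \<in> S \<rightarrow> carrier G" and x: "x \<in> S"
  shows "free_lift S G f (fg_gen x) = f x"
  using free_lift_class[OF f, of "[(True, x)]"] x f unfolding fg_gen_def by (auto simp: Pi_def)

end

lemma fg_gen_carrier: "x \<in> S \<Longrightarrow> fg_gen x \<in> carrier (free_group S)"
  unfolding fg_gen_def by (rule fg_carrierI) auto




lemma (in group_hom) vimage_subgroup:
  assumes "subgroup K H"
  shows "subgroup {x \<in> carrier G. h x \<in> K} G"
proof (rule G.subgroupI)
  show "{x \<in> carrier G. h x \<in> K} \<subseteq> carrier G" by auto
  show "{x \<in> carrier G. h x \<in> K} \<noteq> {}" using subgroup.one_closed[OF assms] by auto
next
  fix a assume "a \<in> {x \<in> carrier G. h x \<in> K}"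
  then show "inv\<^bsub>G\<^esub> a \<in> {x \<in> carrier G. h x \<in> K}"
    using subgroup.m_inv_closed[OF assms] by auto
next
  fix a b assume "a \<in> {x \<in> carrier G. h x \<in> K}" "b \<in> {x \<in> carrier G. h x \<in> K}"
  then show "a \<otimes>\<^bsub>G\<^esub> b \<in> {x \<in> carrier G. h x \<in> K}"
    using subgroup.m_closed[OF assms] by auto
qed

lemma (in group_hom) generate_into:
  assumes "Xs \<subseteq> carrier G" "subgroup K H" "\<And>x. x \<in> Xs \<Longrightarrow> h x \<in> K"
    and "y \<in> generate G Xs"
  shows "h y \<in> K"
proof -
  have "generate G Xs \<subseteq> {x \<in> carrier G. h x \<in> K}"
    by (rule G.generate_subgroup_incl) (use assms vimage_subgroup in auto)
  then show ?thesis using assms(4) by auto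
qed

context group
begin

lemma inv_cancel_left1 [simp]: "x \<in> carrier G \<Longrightarrow> y \<in> carrier G \<Longrightarrow> inv x \<otimes> (x \<otimes> y) = y"
  by (simp add: m_assoc[symmetric])
lemma inv_cancel_left2 [simp]: "x \<in> carrier G \<Longrightarrow> y \<in> carrier G \<Longrightarrow> x \<otimes> (inv x \<otimes> y) = y"
  by (simp add: m_assoc[symmetric])

lemma conj_mult:
  assumes "g \<in> carrier G" "a \<in> carrier G" "b \<in> carrier G"
  shows "g \<otimes> (a \<otimes> b) \<otimes> inv g = (g \<otimes> a \<otimes> inv g) \<otimes> (g \<otimes> b \<otimes> inv g)"
  using assms by (simp add: m_assoc)

lemma conj_inv:
  assumes "g \<in> carrier G" "a \<in> carrier G"
  shows "g \<otimes> inv a \<otimes> inv g = inv (g \<otimes> a \<otimes> inv g)"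
  using assms by (simp add: inv_mult_group m_assoc)

lemma conj_pow:
  assumes "g \<in> carrier G" "a \<in> carrier G"
  shows "g \<otimes> (a [^] (k::nat)) \<otimes> inv g = (g \<otimes> a \<otimes> inv g) [^] k"
proof (induction k)
  case 0 then show ?case using assms by simp
next
  case (Suc k)
  have "g \<otimes> (a [^] Suc k) \<otimes> inv g = (g \<otimes> a [^] k \<otimes> inv g) \<otimes> (g \<otimes> a \<otimes> inv g)"
    using assms by (simp add: m_assoc)
  then show ?case using Suc by simp
qed

lemma conj_comm:
  assumes "g \<in> carrier G" "a \<in> carrier G" "b \<in> carrier G"
  shows "g \<otimes> (a \<otimes> b \<otimes> inv a \<otimes> inv b) \<otimes> inv g =
    (g \<otimes> a \<otimes> inv g) \<otimes> (g \<otimes> b \<otimes> inv g) \<otimes> inv (g \<otimes> a \<otimes> inv g) \<otimes> inv (g \<otimes> b \<otimes> inv g)"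
  using assms by (simp add: m_assoc inv_mult_group)

lemma comm_subgroup_normal:
  assumes "H \<subseteq> carrier G" "K \<subseteq> carrier G"
    and "\<And>g x. g \<in> carrier G \<Longrightarrow> x \<in> H \<Longrightarrow> g \<otimes> x \<otimes> inv g \<in> H"
    and "\<And>g x. g \<in> carrier G \<Longrightarrow> x \<in> K \<Longrightarrow> g \<otimes> x \<otimes> inv g \<in> K"
  shows "comm_subgroup G H K \<lhd> G"
  unfolding comm_subgroup_def
proof (rule normal_generateI)
  show "(\<Union>h\<in>H. \<Union>k\<in>K. {h \<otimes> k \<otimes> inv h \<otimes> inv k}) \<subseteq> carrier G"
  proof
    fix x assume "x \<in> (\<Union>h\<in>H. \<Union>k\<in>K. {h \<otimes> k \<otimes> inv h \<otimes> inv k})"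
    then obtain a b where ab: "a \<in> H" "b \<in> K" "x = a \<otimes> b \<otimes> inv a \<otimes> inv b" by blast
    have a: "a \<in> carrier G" using assms(1) ab(1) by (rule subsetD)
    have b: "b \<in> carrier G" using assms(2) ab(2) by (rule subsetD)
    show "x \<in> carrier G" unfolding ab(3) using a b by simp
  qed
next
  fix x g assume x: "x \<in> (\<Union>h\<in>H. \<Union>k\<in>K. {h \<otimes> k \<otimes> inv h \<otimes> inv k})" and g: "g \<in> carrier G"
  then obtain a b where ab: "a \<in> H" "b \<in> K" "x = a \<otimes> b \<otimes> inv a \<otimes> inv b" by blast
  have a: "a \<in> carrier G" using assms(1) ab(1) by (rule subsetD)
  have b: "b \<in> carrier G" using assms(2) ab(2) by (rule subsetD)
  have e: "g \<otimes> x \<otimes> inv g = (g \<otimes> a \<otimes> inv g) \<otimes> (g \<otimes> b \<otimes> inv g) \<otimes> inv (g \<otimes> a \<otimes> inv g) \<otimes> inv (g \<otimes> b \<otimes> inv g)"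
    unfolding ab(3) by (rule conj_comm[OF g a b])
  have h1: "g \<otimes> a \<otimes> inv g \<in> H" by (rule assms(3)[OF g ab(1)])
  have h2: "g \<otimes> b \<otimes> inv g \<in> K" by (rule assms(4)[OF g ab(2)])
  show "g \<otimes> x \<otimes> inv g \<in> (\<Union>h\<in>H. \<Union>k\<in>K. {h \<otimes> k \<otimes> inv h \<otimes> inv k})"
    unfolding e using h1 h2 by blast
qed

lemma lower_central_normal: "lower_central G i \<lhd> G"
proof (induction i)
  case 0 then show ?case by (simp add: subgroup_self normal_inv_iff)
next
  case (Suc i)
  then have s: "lower_central G i \<subseteq> carrier G" by (simp add: normal_imp_subgroup subgroup.subset)
  show ?case unfolding lower_central.simps
    by (rule comm_subgroup_normal[OF s subset_refl])
       (use Suc in \<open>auto intro: normal.inv_op_closed2\<close>)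
qed

lemma comm_subgroup_sub:
  assumes "H \<subseteq> carrier G" "K \<subseteq> carrier G"
  shows "subgroup (comm_subgroup G H K) G"
  unfolding comm_subgroup_def by (rule generate_is_subgroup) (use assms in \<open>blast intro: m_closed inv_closed\<close>)


lemma comm_subgroup_sub_R:
  assumes "R \<lhd> G"
  shows "comm_subgroup G (carrier G) R \<subseteq> R \<inter> derived G (carrier G)"
proof -
  have sR: "subgroup R G" using assms normal_imp_subgroup by blast
  have s: "R \<subseteq> carrier G" using sR subgroup.subset by blast
  have "comm_subgroup G (carrier G) R \<subseteq> R"
    unfolding comm_subgroup_def
  proof (rule generate_subgroup_incl[OF _ sR])
    show "(\<Union>h\<in>carrier G. \<Union>k\<in>R. {h \<otimes> k \<otimes> inv h \<otimes> inv k}) \<subseteq> R"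
    proof (rule subsetI)
      fix x assume "x \<in> (\<Union>h\<in>carrier G. \<Union>k\<in>R. {h \<otimes> k \<otimes> inv h \<otimes> inv k})"
      then obtain a b where ab: "a \<in> carrier G" "b \<in> R" "x = a \<otimes> b \<otimes> inv a \<otimes> inv b" by blast
      have "a \<otimes> b \<otimes> inv a \<in> R" using normal.inv_op_closed2[OF assms ab(1,2)] .
      moreover have "inv b \<in> R" by (rule subgroup.m_inv_closed[OF sR ab(2)])
      ultimately show "x \<in> R" unfolding ab(3) by (rule subgroup.m_closed[OF sR])
    qed
  qed
  moreover have "comm_subgroup G (carrier G) R \<subseteq> derived G (carrier G)"
    unfolding comm_subgroup_def derived_def
  proof (rule mono_generate, rule subsetI)
    fix x assume "x \<in> (\<Union>h\<in>carrier G. \<Union>k\<in>R. {h \<otimes> k \<otimes> inv h \<otimes> inv k})"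
    then obtain a b where ab: "a \<in> carrier G" "b \<in> R" "x = a \<otimes> b \<otimes> inv a \<otimes> inv b" by blast
    have b: "b \<in> carrier G" using s ab(2) by (rule subsetD)
    show "x \<in> derived_set G (carrier G)"
      by (rule UN_I[OF ab(1)], rule UN_I[OF b]) (simp add: ab(3))
  qed
  ultimately show ?thesis by blast
qed

lemma hopf_mult_group:
  assumes "R \<lhd> G"
  shows "group (hopf_mult G R)"
proof -
  have sR: "subgroup R G" using assms normal_imp_subgroup by blast
  have s: "R \<subseteq> carrier G" using sR subgroup.subset by blast
  have sD: "subgroup (derived G (carrier G)) G"
    unfolding derived_def by (rule generate_is_subgroup) (blast intro: m_closed inv_closed)
  have sC: "subgroup (R \<inter> derived G (carrier G)) G" by (rule subgroups_Inter_pair[OF sR sD])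
  have nN: "comm_subgroup G (carrier G) R \<lhd> G"
    by (rule comm_subgroup_normal[OF subset_refl s]) (auto intro: normal.inv_op_closed2[OF assms])
  have "comm_subgroup G (carrier G) R \<lhd> G\<lparr>carrier := R \<inter> derived G (carrier G)\<rparr>"
    by (rule normal_restrict_supergroup[OF sC nN comm_subgroup_sub_R[OF assms]])
  then show ?thesis unfolding hopf_mult_def by (rule normal.factorgroup_is_group)
qed

end

lemma (in group_hom) lower_central_hom:
  "x \<in> lower_central G i \<Longrightarrow> h x \<in> lower_central H i"
proof (induction i arbitrary: x)
  case 0 then show ?case by simp
next
  case (Suc i)
  have sG: "lower_central G i \<subseteq> carrier G"
    using G.lower_central_normal normal_imp_subgroup subgroup.subset by blast
  have sH: "lower_central H i \<subseteq> carrier H"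
    using H.lower_central_normal normal_imp_subgroup subgroup.subset by blast
  show ?case using Suc.prems unfolding lower_central.simps comm_subgroup_def
  proof (rule generate_into[rotated 3])
    show "(\<Union>ha\<in>lower_central G i. \<Union>k\<in>carrier G. {ha \<otimes>\<^bsub>G\<^esub> k \<otimes>\<^bsub>G\<^esub> inv\<^bsub>G\<^esub> ha \<otimes>\<^bsub>G\<^esub> inv\<^bsub>G\<^esub> k}) \<subseteq> carrier G"
      using sG by auto
    show "subgroup (generate H (\<Union>ha\<in>lower_central H i. \<Union>k\<in>carrier H. {ha \<otimes>\<^bsub>H\<^esub> k \<otimes>\<^bsub>H\<^esub> inv\<^bsub>H\<^esub> ha \<otimes>\<^bsub>H\<^esub> inv\<^bsub>H\<^esub> k})) H"
      by (rule H.generate_is_subgroup) (use sH in auto)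
  next
    fix y assume "y \<in> (\<Union>ha\<in>lower_central G i. \<Union>k\<in>carrier G. {ha \<otimes>\<^bsub>G\<^esub> k \<otimes>\<^bsub>G\<^esub> inv\<^bsub>G\<^esub> ha \<otimes>\<^bsub>G\<^esub> inv\<^bsub>G\<^esub> k})"
    then obtain a b where ab: "a \<in> lower_central G i" "b \<in> carrier G"
      "y = a \<otimes>\<^bsub>G\<^esub> b \<otimes>\<^bsub>G\<^esub> inv\<^bsub>G\<^esub> a \<otimes>\<^bsub>G\<^esub> inv\<^bsub>G\<^esub> b" by blast
    have a: "a \<in> carrier G" using ab sG by auto
    have "h y = h a \<otimes>\<^bsub>H\<^esub> h b \<otimes>\<^bsub>H\<^esub> inv\<^bsub>H\<^esub> h a \<otimes>\<^bsub>H\<^esub> inv\<^bsub>H\<^esub> h b"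
      using ab a by simp
    moreover have "h a \<in> lower_central H i" using Suc.IH ab by blast
    moreover have hb: "h b \<in> carrier H" using ab by simp
    ultimately show "h y \<in> generate H (\<Union>ha\<in>lower_central H i. \<Union>k\<in>carrier H. {ha \<otimes>\<^bsub>H\<^esub> k \<otimes>\<^bsub>H\<^esub> inv\<^bsub>H\<^esub> ha \<otimes>\<^bsub>H\<^esub> inv\<^bsub>H\<^esub> k})"
      using ab hb by (blast intro: generate.incl)
  qed
qed

lemma Mod_pow_restrict:
  "Xs [^]\<^bsub>(F\<lparr>carrier := C\<rparr>) Mod N\<^esub> (k::nat) = Xs [^]\<^bsub>F Mod N\<^esub> k"
  by (induction k) (simp_all add: FactGroup_def set_mult_def)

lemma (in normal) Mod_pow:
  assumes "a \<in> carrier G"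
  shows "(H #> a) [^]\<^bsub>G Mod H\<^esub> (k::nat) = H #> (a [^] k)"
proof (induction k)
  case 0 then show ?case by (simp add: FactGroup_def coset_mult_one subset)
next
  case (Suc k)
  then show ?case using assms by (simp add: FactGroup_def rcos_sum)
qed




lemma F2_group: "group F2"
  unfolding F2_def by (rule free_group_is_group)

lemma gen_a_carrier: "gen_a \<in> carrier F2"
  unfolding gen_a_def F2_def by (rule fg_gen_carrier) simp
lemma gen_b_carrier: "gen_b \<in> carrier F2"
  unfolding gen_b_def F2_def by (rule fg_gen_carrier) simp

lemma hopf_word_carrier: "hopf_word n \<in> carrier F2"
proof -
  interpret F2: group F2 by (rule F2_group)
  show ?thesis unfolding hopf_word_def using gen_a_carrier gen_b_carrier by simp
qed

lemma R2_gens_sub: "{x [^]\<^bsub>F2\<^esub> (n::nat) | x. x \<in> carrier F2} \<union> lower_central F2 c \<subseteq> carrier F2"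
proof -
  interpret F2: group F2 by (rule F2_group)
  have "lower_central F2 c \<subseteq> carrier F2"
    using F2.lower_central_normal normal_imp_subgroup subgroup.subset by blast
  then show ?thesis using F2.nat_pow_closed by auto
qed

lemma R2_normal: "R2nc_rel n c \<lhd> F2"
proof -
  interpret F2: group F2 by (rule F2_group)
  show ?thesis unfolding R2nc_rel_def
  proof (rule F2.normal_generateI[OF R2_gens_sub])
    fix x g assume x: "x \<in> {x [^]\<^bsub>F2\<^esub> (n::nat) | x. x \<in> carrier F2} \<union> lower_central F2 c"
      and g: "g \<in> carrier F2"
    show "g \<otimes>\<^bsub>F2\<^esub> x \<otimes>\<^bsub>F2\<^esub> inv\<^bsub>F2\<^esub> g \<in> {x [^]\<^bsub>F2\<^esub> n | x. x \<in> carrier F2} \<union> lower_central F2 c"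
      using x
    proof
      assume "x \<in> {x [^]\<^bsub>F2\<^esub> n | x. x \<in> carrier F2}"
      then obtain y where y: "y \<in> carrier F2" "x = y [^]\<^bsub>F2\<^esub> n" by blast
      have "g \<otimes>\<^bsub>F2\<^esub> x \<otimes>\<^bsub>F2\<^esub> inv\<^bsub>F2\<^esub> g = (g \<otimes>\<^bsub>F2\<^esub> y \<otimes>\<^bsub>F2\<^esub> inv\<^bsub>F2\<^esub> g) [^]\<^bsub>F2\<^esub> n"
        using y g F2.conj_pow by simp
      moreover have "g \<otimes>\<^bsub>F2\<^esub> y \<otimes>\<^bsub>F2\<^esub> inv\<^bsub>F2\<^esub> g \<in> carrier F2" using y g by simp
      ultimately show ?thesis by blast
    next
      assume "x \<in> lower_central F2 c"
      then show ?thesis using g normal.inv_op_closed2[OF F2.lower_central_normal] by blast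
    qed
  qed
qed

lemma N2_normal: "comm_subgroup F2 (carrier F2) (R2nc_rel n c) \<lhd> F2"
proof -
  interpret F2: group F2 by (rule F2_group)
  have s: "R2nc_rel n c \<subseteq> carrier F2"
    using R2_normal normal_imp_subgroup subgroup.subset by blast
  show ?thesis
    by (rule F2.comm_subgroup_normal[OF subset_refl s])
       (auto intro: normal.inv_op_closed2[OF R2_normal])
qed

lemma hopf_word_pow_in: "hopf_word n [^]\<^bsub>F2\<^esub> e_nc n c \<in> comm_subgroup F2 (carrier F2) (R2nc_rel n c)"
proof -
  interpret F2: group F2 by (rule F2_group)
  define N2 where "N2 = comm_subgroup F2 (carrier F2) (R2nc_rel n c)"
  interpret N2: normal N2 F2 unfolding N2_def by (rule N2_normal)
  interpret Q: group "F2 Mod N2" by (rule N2.factorgroup_is_group)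
  define x where "x = N2 #>\<^bsub>F2\<^esub> hopf_word n"
  have xc: "x \<in> carrier (F2 Mod N2)"
    unfolding x_def FactGroup_def RCOSETS_def using hopf_word_carrier by auto
  have hg: "group (hopf_mult F2 (R2nc_rel n c))" by (rule F2.hopf_mult_group[OF R2_normal])
  have "e_nc n c = group.ord (F2 Mod N2) x"
    unfolding e_nc_def group.ord_def[OF hg] group.ord_def[OF Q.is_group]
    unfolding hopf_mult_def N2_def[symmetric] x_def[symmetric] Mod_pow_restrict
    by (simp add: FactGroup_def)
  then have "x [^]\<^bsub>F2 Mod N2\<^esub> e_nc n c = \<one>\<^bsub>F2 Mod N2\<^esub>" using Q.pow_ord_eq_1[OF xc] by simp
  then have "N2 #>\<^bsub>F2\<^esub> (hopf_word n [^]\<^bsub>F2\<^esub> e_nc n c) = N2"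
    unfolding x_def N2.Mod_pow[OF hopf_word_carrier] by (simp add: FactGroup_def)
  then have "hopf_word n [^]\<^bsub>F2\<^esub> e_nc n c \<in> N2"
    using F2.coset_join1 hopf_word_carrier N2.subgroup_axioms by blast
  then show ?thesis unfolding N2_def .
qed




context group
begin

lemma central_inv:
  assumes z: "z \<in> carrier G" and c: "\<forall>q\<in>carrier G. z \<otimes> q = q \<otimes> z"
  shows "\<forall>q\<in>carrier G. inv z \<otimes> q = q \<otimes> inv z"
proof
  fix q assume q: "q \<in> carrier G"
  have "z \<otimes> (q \<otimes> inv z) = (z \<otimes> q) \<otimes> inv z" using z q by (simp add: m_assoc)
  also have "\<dots> = (q \<otimes> z) \<otimes> inv z" using c q by simp
  also have "\<dots> = q" using z q by (simp add: m_assoc)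
  finally have e: "z \<otimes> (q \<otimes> inv z) = q" .
  have "inv z \<otimes> q = inv z \<otimes> (z \<otimes> (q \<otimes> inv z))" by (simp only: e)
  also have "\<dots> = q \<otimes> inv z" using z q by simp
  finally show "inv z \<otimes> q = q \<otimes> inv z" .
qed

lemma central_mult:
  assumes z1: "z1 \<in> carrier G" and c1: "\<forall>q\<in>carrier G. z1 \<otimes> q = q \<otimes> z1"
    and z2: "z2 \<in> carrier G" and c2: "\<forall>q\<in>carrier G. z2 \<otimes> q = q \<otimes> z2"
  shows "\<forall>q\<in>carrier G. (z1 \<otimes> z2) \<otimes> q = q \<otimes> (z1 \<otimes> z2)"
proof
  fix q assume q: "q \<in> carrier G"
  have "(z1 \<otimes> z2) \<otimes> q = z1 \<otimes> (z2 \<otimes> q)" using z1 z2 q by (simp add: m_assoc)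
  also have "\<dots> = z1 \<otimes> (q \<otimes> z2)" using c2 q by simp
  also have "\<dots> = (z1 \<otimes> q) \<otimes> z2" using z1 z2 q by (simp add: m_assoc)
  also have "\<dots> = (q \<otimes> z1) \<otimes> z2" using c1 q by simp
  also have "\<dots> = q \<otimes> (z1 \<otimes> z2)" using z1 z2 q by (simp add: m_assoc)
  finally show "(z1 \<otimes> z2) \<otimes> q = q \<otimes> (z1 \<otimes> z2)" .
qed

lemma central_pow:
  assumes z: "z \<in> carrier G" and c: "\<forall>q\<in>carrier G. z \<otimes> q = q \<otimes> z"
  shows "\<forall>q\<in>carrier G. (z [^] (k::nat)) \<otimes> q = q \<otimes> (z [^] k)"
proof (induction k)
  case 0 then show ?case by simp
next
  case (Suc k)
  have "\<forall>q\<in>carrier G. (z [^] k \<otimes> z) \<otimes> q = q \<otimes> (z [^] k \<otimes> z)"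
    by (rule central_mult[OF _ Suc _ c]) (use z in simp_all)
  then show ?case by simp
qed

end




theorem theorem2:
  fixes G :: "('g, 'm) monoid_scheme" and n c :: nat
  assumes "n \<ge> 2" and "c \<ge> 1"
    and "group G" and "finite (carrier G)"
    and "has_exponent G n" and "nilpotent_class_le G c"
  shows "\<forall>x \<in> carrier (schur_mult G). x [^]\<^bsub>schur_mult G\<^esub> (n * e_nc n c) = \<one>\<^bsub>schur_mult G\<^esub>"
proof -
  interpret G: group G by fact
  define F where "F = free_group (carrier G)"
  interpret F: group F unfolding F_def by (rule free_group_is_group)
  define h where "h = free_lift (carrier G) G (\<lambda>x. x)"
  have hhom: "h \<in> hom F G" unfolding h_def F_def by (rule G.free_lift_hom) simp
  have hF_gh: "group_hom F G h"
    unfolding group_hom_def group_hom_axioms_def using F.is_group G.is_group hhom by simp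
  interpret hF: group_hom F G h by (rule hF_gh)
  define K where "K = kernel F G h"
  have Knormal: "K \<lhd> F" unfolding K_def by (rule hF.normal_kernel)
  have sK: "subgroup K F" using Knormal normal_imp_subgroup by blast
  have Ksub: "K \<subseteq> carrier F" using sK subgroup.subset by blast
  define N where "N = comm_subgroup F (carrier F) K"
  have Nnormal: "N \<lhd> F" unfolding N_def
    by (rule F.comm_subgroup_normal[OF subset_refl Ksub]) (auto intro: normal.inv_op_closed2[OF Knormal])
  interpret N: normal N F by (rule Nnormal)
  have sN: "subgroup N F" by (rule N.subgroup_axioms)
  define e where "e = e_nc n c"
  have powK: "\<And>u. u \<in> carrier F \<Longrightarrow> u [^]\<^bsub>F\<^esub> n \<in> K"
  proof -
    fix u assume u: "u \<in> carrier F"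
    have hu: "h u \<in> carrier G" using u by simp
    have "h (u [^]\<^bsub>F\<^esub> n) = h u [^]\<^bsub>G\<^esub> n" by (rule hF.hom_nat_pow[OF u])
    also have "\<dots> = \<one>\<^bsub>G\<^esub>" using assms(5) hu unfolding has_exponent_def by blast
    finally show "u [^]\<^bsub>F\<^esub> n \<in> K" unfolding K_def kernel_def using u by simp
  qed
  have commN: "\<And>y k. y \<in> carrier F \<Longrightarrow> k \<in> K \<Longrightarrow> y \<otimes>\<^bsub>F\<^esub> k \<otimes>\<^bsub>F\<^esub> inv\<^bsub>F\<^esub> y \<otimes>\<^bsub>F\<^esub> inv\<^bsub>F\<^esub> k \<in> N"
    unfolding N_def comm_subgroup_def by (rule generate.incl) blast
  have cent: "\<And>k y. k \<in> K \<Longrightarrow> y \<in> carrier F \<Longrightarrow> N #>\<^bsub>F\<^esub> (k \<otimes>\<^bsub>F\<^esub> y) = N #>\<^bsub>F\<^esub> (y \<otimes>\<^bsub>F\<^esub> k)"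
  proof -
    fix k y assume k: "k \<in> K" and y: "y \<in> carrier F"
    have kc: "k \<in> carrier F" using Ksub k by (rule subsetD)
    have "(y \<otimes>\<^bsub>F\<^esub> k) \<otimes>\<^bsub>F\<^esub> inv\<^bsub>F\<^esub> (k \<otimes>\<^bsub>F\<^esub> y) = y \<otimes>\<^bsub>F\<^esub> k \<otimes>\<^bsub>F\<^esub> inv\<^bsub>F\<^esub> y \<otimes>\<^bsub>F\<^esub> inv\<^bsub>F\<^esub> k"
      using kc y by (simp add: F.inv_mult_group F.m_assoc)
    then have "(y \<otimes>\<^bsub>F\<^esub> k) \<otimes>\<^bsub>F\<^esub> inv\<^bsub>F\<^esub> (k \<otimes>\<^bsub>F\<^esub> y) \<in> N" using commN[OF y k] by simp
    then have "y \<otimes>\<^bsub>F\<^esub> k \<in> N #>\<^bsub>F\<^esub> (k \<otimes>\<^bsub>F\<^esub> y)"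
      using subgroup.rcos_module[OF sN F.is_group] kc y by simp
    then show "N #>\<^bsub>F\<^esub> (k \<otimes>\<^bsub>F\<^esub> y) = N #>\<^bsub>F\<^esub> (y \<otimes>\<^bsub>F\<^esub> k)"
      using F.repr_independence[OF _ _ sN] kc y by simp
  qed
  have P: "\<And>u v. u \<in> carrier F \<Longrightarrow> v \<in> carrier F \<Longrightarrow>
     (inv\<^bsub>F\<^esub> (v [^]\<^bsub>F\<^esub> n) \<otimes>\<^bsub>F\<^esub> inv\<^bsub>F\<^esub> (u [^]\<^bsub>F\<^esub> n) \<otimes>\<^bsub>F\<^esub> (u \<otimes>\<^bsub>F\<^esub> v) [^]\<^bsub>F\<^esub> n) [^]\<^bsub>F\<^esub> e \<in> N"
  proof -
    fix u v assume u: "u \<in> carrier F" and v: "v \<in> carrier F"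
    interpret F2: group F2 by (rule F2_group)
    define \<phi> where "\<phi> = free_lift UNIV F (\<lambda>b. if b then u else v)"
    have fm: "(\<lambda>b. if b then u else v) \<in> UNIV \<rightarrow> carrier F" using u v by auto
    have phom: "\<phi> \<in> hom F2 F" unfolding \<phi>_def F2_def by (rule F.free_lift_hom[OF fm])
    have phi_gh: "group_hom F2 F \<phi>"
      unfolding group_hom_def group_hom_axioms_def using F.is_group F2.is_group phom by simp
    interpret phi: group_hom F2 F \<phi> by (rule phi_gh)
    have pa: "\<phi> gen_a = u" unfolding \<phi>_def gen_a_def using F.free_lift_gen[OF fm, of True] by simp
    have pb: "\<phi> gen_b = v" unfolding \<phi>_def gen_b_def using F.free_lift_gen[OF fm, of False] by simp
    have psi: "group_hom F2 G (h \<circ> \<phi>)"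
      unfolding group_hom_def group_hom_axioms_def
      using F2.is_group G.is_group hom_compose[OF phom hhom] by simp
    have R2K: "\<And>x. x \<in> R2nc_rel n c \<Longrightarrow> \<phi> x \<in> K"
    proof -
      fix x assume x: "x \<in> R2nc_rel n c"
      show "\<phi> x \<in> K"
      proof (rule phi.generate_into[OF R2_gens_sub sK _ x[unfolded R2nc_rel_def]])
        fix y assume y: "y \<in> {x [^]\<^bsub>F2\<^esub> n | x. x \<in> carrier F2} \<union> lower_central F2 c"
        then show "\<phi> y \<in> K"
        proof
          assume "y \<in> {x [^]\<^bsub>F2\<^esub> n | x. x \<in> carrier F2}"
          then obtain z where z: "z \<in> carrier F2" "y = z [^]\<^bsub>F2\<^esub> n" by blast
          have "\<phi> y = \<phi> z [^]\<^bsub>F\<^esub> n" using z phi.hom_nat_pow by simp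
          then show "\<phi> y \<in> K" using powK[of "\<phi> z"] z by simp
        next
          assume y2: "y \<in> lower_central F2 c"
          have yc: "y \<in> carrier F2"
            using y2 F2.lower_central_normal normal_imp_subgroup subgroup.subset by blast
          have "(h \<circ> \<phi>) y \<in> lower_central G c"
            by (rule group_hom.lower_central_hom[OF psi y2])
          then have "h (\<phi> y) = \<one>\<^bsub>G\<^esub>" using assms(6) unfolding nilpotent_class_le_def by simp
          then show "\<phi> y \<in> K" unfolding K_def kernel_def using yc by simp
        qed
      qed
    qed
    have R2sub: "R2nc_rel n c \<subseteq> carrier F2"
      using R2_normal normal_imp_subgroup subgroup.subset by blast
    have N2N: "\<And>x. x \<in> comm_subgroup F2 (carrier F2) (R2nc_rel n c) \<Longrightarrow> \<phi> x \<in> N"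
    proof -
      fix x assume x: "x \<in> comm_subgroup F2 (carrier F2) (R2nc_rel n c)"
      show "\<phi> x \<in> N"
      proof (rule phi.generate_into[OF _ sN _ x[unfolded comm_subgroup_def]])
        show "(\<Union>ha\<in>carrier F2. \<Union>k\<in>R2nc_rel n c. {ha \<otimes>\<^bsub>F2\<^esub> k \<otimes>\<^bsub>F2\<^esub> inv\<^bsub>F2\<^esub> ha \<otimes>\<^bsub>F2\<^esub> inv\<^bsub>F2\<^esub> k}) \<subseteq> carrier F2"
        proof (rule subsetI)
          fix y assume "y \<in> (\<Union>ha\<in>carrier F2. \<Union>k\<in>R2nc_rel n c. {ha \<otimes>\<^bsub>F2\<^esub> k \<otimes>\<^bsub>F2\<^esub> inv\<^bsub>F2\<^esub> ha \<otimes>\<^bsub>F2\<^esub> inv\<^bsub>F2\<^esub> k})"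
          then obtain a b where ab: "a \<in> carrier F2" "b \<in> R2nc_rel n c"
            "y = a \<otimes>\<^bsub>F2\<^esub> b \<otimes>\<^bsub>F2\<^esub> inv\<^bsub>F2\<^esub> a \<otimes>\<^bsub>F2\<^esub> inv\<^bsub>F2\<^esub> b" by blast
          have b: "b \<in> carrier F2" using R2sub ab(2) by (rule subsetD)
          show "y \<in> carrier F2" unfolding ab(3) using ab(1) b by simp
        qed
      next
        fix y assume "y \<in> (\<Union>ha\<in>carrier F2. \<Union>k\<in>R2nc_rel n c. {ha \<otimes>\<^bsub>F2\<^esub> k \<otimes>\<^bsub>F2\<^esub> inv\<^bsub>F2\<^esub> ha \<otimes>\<^bsub>F2\<^esub> inv\<^bsub>F2\<^esub> k})"
        then obtain a b where ab: "a \<in> carrier F2" "b \<in> R2nc_rel n c"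
          "y = a \<otimes>\<^bsub>F2\<^esub> b \<otimes>\<^bsub>F2\<^esub> inv\<^bsub>F2\<^esub> a \<otimes>\<^bsub>F2\<^esub> inv\<^bsub>F2\<^esub> b" by blast
        have b: "b \<in> carrier F2" using R2sub ab(2) by (rule subsetD)
        have "\<phi> y = \<phi> a \<otimes>\<^bsub>F\<^esub> \<phi> b \<otimes>\<^bsub>F\<^esub> inv\<^bsub>F\<^esub> \<phi> a \<otimes>\<^bsub>F\<^esub> inv\<^bsub>F\<^esub> \<phi> b"
          unfolding ab(3) using ab(1) b by simp
        then show "\<phi> y \<in> N" using commN[OF phi.hom_closed[OF ab(1)] R2K[OF ab(2)]] by simp
      qed
    qed
    have w: "hopf_word n [^]\<^bsub>F2\<^esub> e \<in> comm_subgroup F2 (carrier F2) (R2nc_rel n c)"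
      unfolding e_def by (rule hopf_word_pow_in)
    have "\<phi> (hopf_word n [^]\<^bsub>F2\<^esub> e) = \<phi> (hopf_word n) [^]\<^bsub>F\<^esub> e"
      using hopf_word_carrier phi.hom_nat_pow by simp
    also have "\<phi> (hopf_word n) = inv\<^bsub>F\<^esub> (v [^]\<^bsub>F\<^esub> n) \<otimes>\<^bsub>F\<^esub> inv\<^bsub>F\<^esub> (u [^]\<^bsub>F\<^esub> n) \<otimes>\<^bsub>F\<^esub> (u \<otimes>\<^bsub>F\<^esub> v) [^]\<^bsub>F\<^esub> n"
      unfolding hopf_word_def using gen_a_carrier gen_b_carrier
      by (simp add: phi.hom_nat_pow pa pb)
    finally show "(inv\<^bsub>F\<^esub> (v [^]\<^bsub>F\<^esub> n) \<otimes>\<^bsub>F\<^esub> inv\<^bsub>F\<^esub> (u [^]\<^bsub>F\<^esub> n) \<otimes>\<^bsub>F\<^esub> (u \<otimes>\<^bsub>F\<^esub> v) [^]\<^bsub>F\<^esub> n) [^]\<^bsub>F\<^esub> e \<in> N"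
      using N2N[OF w] by simp
  qed
  define Q where "Q = F Mod N"
  interpret Q: group Q unfolding Q_def by (rule N.factorgroup_is_group)
  define \<pi> where "\<pi> = (\<lambda>a. N #>\<^bsub>F\<^esub> a)"
  have pi_gh: "group_hom F Q \<pi>"
    unfolding group_hom_def group_hom_axioms_def Q_def \<pi>_def
    using F.is_group N.factorgroup_is_group N.r_coset_hom_Mod by simp
  interpret pi: group_hom F Q \<pi> by (rule pi_gh)
  have Qcar: "\<And>q. q \<in> carrier Q \<Longrightarrow> \<exists>u\<in>carrier F. q = \<pi> u"
    unfolding Q_def \<pi>_def FactGroup_def RCOSETS_def by auto
  have Qone: "\<one>\<^bsub>Q\<^esub> = N" unfolding Q_def FactGroup_def by simp
  have piN: "\<And>t. t \<in> N \<Longrightarrow> \<pi> t = \<one>\<^bsub>Q\<^esub>"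
    unfolding Qone \<pi>_def using F.coset_join2 sN subgroup.mem_carrier[OF sN] by blast
  have centK: "\<And>k. k \<in> K \<Longrightarrow> \<forall>q\<in>carrier Q. \<pi> k \<otimes>\<^bsub>Q\<^esub> q = q \<otimes>\<^bsub>Q\<^esub> \<pi> k"
  proof
    fix k q assume k: "k \<in> K" and q: "q \<in> carrier Q"
    obtain y where y: "y \<in> carrier F" "q = \<pi> y" using Qcar[OF q] by blast
    have kc: "k \<in> carrier F" using Ksub k by (rule subsetD)
    have "\<pi> k \<otimes>\<^bsub>Q\<^esub> \<pi> y = \<pi> (k \<otimes>\<^bsub>F\<^esub> y)" using kc y by simp
    also have "\<dots> = \<pi> (y \<otimes>\<^bsub>F\<^esub> k)" unfolding \<pi>_def by (rule cent[OF k y(1)])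
    also have "\<dots> = \<pi> y \<otimes>\<^bsub>Q\<^esub> \<pi> k" using kc y by simp
    finally show "\<pi> k \<otimes>\<^bsub>Q\<^esub> q = q \<otimes>\<^bsub>Q\<^esub> \<pi> k" using y by simp
  qed
  have cpow: "\<And>q. q \<in> carrier Q \<Longrightarrow> \<forall>p\<in>carrier Q. q [^]\<^bsub>Q\<^esub> n \<otimes>\<^bsub>Q\<^esub> p = p \<otimes>\<^bsub>Q\<^esub> q [^]\<^bsub>Q\<^esub> n"
  proof -
    fix q assume q: "q \<in> carrier Q"
    obtain u where u: "u \<in> carrier F" "q = \<pi> u" using Qcar[OF q] by blast
    have "q [^]\<^bsub>Q\<^esub> n = \<pi> (u [^]\<^bsub>F\<^esub> n)" using u pi.hom_nat_pow by simp
    then show "\<forall>p\<in>carrier Q. q [^]\<^bsub>Q\<^esub> n \<otimes>\<^bsub>Q\<^esub> p = p \<otimes>\<^bsub>Q\<^esub> q [^]\<^bsub>Q\<^esub> n"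
      using centK[OF powK[OF u(1)]] by simp
  qed
  have fQ: "\<And>x y. x \<in> carrier Q \<Longrightarrow> y \<in> carrier Q \<Longrightarrow>
      (inv\<^bsub>Q\<^esub> (y [^]\<^bsub>Q\<^esub> n) \<otimes>\<^bsub>Q\<^esub> inv\<^bsub>Q\<^esub> (x [^]\<^bsub>Q\<^esub> n) \<otimes>\<^bsub>Q\<^esub> (x \<otimes>\<^bsub>Q\<^esub> y) [^]\<^bsub>Q\<^esub> n) [^]\<^bsub>Q\<^esub> e = \<one>\<^bsub>Q\<^esub>"
  proof -
    fix x y assume x: "x \<in> carrier Q" and y: "y \<in> carrier Q"
    obtain u where u: "u \<in> carrier F" "x = \<pi> u" using Qcar[OF x] by blast
    obtain v where v: "v \<in> carrier F" "y = \<pi> v" using Qcar[OF y] by blast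
    have "(inv\<^bsub>Q\<^esub> (y [^]\<^bsub>Q\<^esub> n) \<otimes>\<^bsub>Q\<^esub> inv\<^bsub>Q\<^esub> (x [^]\<^bsub>Q\<^esub> n) \<otimes>\<^bsub>Q\<^esub> (x \<otimes>\<^bsub>Q\<^esub> y) [^]\<^bsub>Q\<^esub> n) [^]\<^bsub>Q\<^esub> e
        = \<pi> ((inv\<^bsub>F\<^esub> (v [^]\<^bsub>F\<^esub> n) \<otimes>\<^bsub>F\<^esub> inv\<^bsub>F\<^esub> (u [^]\<^bsub>F\<^esub> n) \<otimes>\<^bsub>F\<^esub> (u \<otimes>\<^bsub>F\<^esub> v) [^]\<^bsub>F\<^esub> n) [^]\<^bsub>F\<^esub> e)"
      using u v by (simp add: pi.hom_nat_pow)
    also have "\<dots> = \<one>\<^bsub>Q\<^esub>" by (rule piN[OF P[OF u(1) v(1)]])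
    finally show "(inv\<^bsub>Q\<^esub> (y [^]\<^bsub>Q\<^esub> n) \<otimes>\<^bsub>Q\<^esub> inv\<^bsub>Q\<^esub> (x [^]\<^bsub>Q\<^esub> n) \<otimes>\<^bsub>Q\<^esub> (x \<otimes>\<^bsub>Q\<^esub> y) [^]\<^bsub>Q\<^esub> n) [^]\<^bsub>Q\<^esub> e = \<one>\<^bsub>Q\<^esub>" .
  qed
  define E where "E = n * e"
  have Thom: "\<And>x y. x \<in> carrier Q \<Longrightarrow> y \<in> carrier Q \<Longrightarrow>
      (x \<otimes>\<^bsub>Q\<^esub> y) [^]\<^bsub>Q\<^esub> E = x [^]\<^bsub>Q\<^esub> E \<otimes>\<^bsub>Q\<^esub> y [^]\<^bsub>Q\<^esub> E"
  proof -
    fix x y assume x: "x \<in> carrier Q" and y: "y \<in> carrier Q"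
    define a where "a = x [^]\<^bsub>Q\<^esub> n"
    define b where "b = y [^]\<^bsub>Q\<^esub> n"
    define d where "d = (x \<otimes>\<^bsub>Q\<^esub> y) [^]\<^bsub>Q\<^esub> n"
    define f where "f = inv\<^bsub>Q\<^esub> b \<otimes>\<^bsub>Q\<^esub> inv\<^bsub>Q\<^esub> a \<otimes>\<^bsub>Q\<^esub> d"
    have ac: "a \<in> carrier Q" "b \<in> carrier Q" "d \<in> carrier Q" "f \<in> carrier Q"
      unfolding a_def b_def d_def f_def using x y by simp_all
    have ca: "\<forall>q\<in>carrier Q. a \<otimes>\<^bsub>Q\<^esub> q = q \<otimes>\<^bsub>Q\<^esub> a" unfolding a_def by (rule cpow[OF x])
    have cb: "\<forall>q\<in>carrier Q. b \<otimes>\<^bsub>Q\<^esub> q = q \<otimes>\<^bsub>Q\<^esub> b" unfolding b_def by (rule cpow[OF y])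
    have cd: "\<forall>q\<in>carrier Q. d \<otimes>\<^bsub>Q\<^esub> q = q \<otimes>\<^bsub>Q\<^esub> d" unfolding d_def by (rule cpow) (use x y in simp)
    have cf: "\<forall>q\<in>carrier Q. f \<otimes>\<^bsub>Q\<^esub> q = q \<otimes>\<^bsub>Q\<^esub> f" unfolding f_def
      by (intro Q.central_mult Q.central_inv ca cb cd) (use ac in simp_all)
    have fe: "f [^]\<^bsub>Q\<^esub> e = \<one>\<^bsub>Q\<^esub>" unfolding f_def a_def b_def d_def by (rule fQ[OF x y])
    have dd: "d = a \<otimes>\<^bsub>Q\<^esub> b \<otimes>\<^bsub>Q\<^esub> f" unfolding f_def using ac by (simp add: Q.m_assoc)
    have "(x \<otimes>\<^bsub>Q\<^esub> y) [^]\<^bsub>Q\<^esub> E = d [^]\<^bsub>Q\<^esub> e"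
      unfolding E_def d_def using x y by (simp add: Q.nat_pow_pow)
    also have "\<dots> = (a \<otimes>\<^bsub>Q\<^esub> b) [^]\<^bsub>Q\<^esub> e \<otimes>\<^bsub>Q\<^esub> f [^]\<^bsub>Q\<^esub> e"
      unfolding dd by (rule Q.pow_mult_distrib) (use ac cf in simp_all)
    also have "\<dots> = a [^]\<^bsub>Q\<^esub> e \<otimes>\<^bsub>Q\<^esub> b [^]\<^bsub>Q\<^esub> e"
      using ac fe Q.pow_mult_distrib[of a b e] ca by simp
    also have "\<dots> = x [^]\<^bsub>Q\<^esub> E \<otimes>\<^bsub>Q\<^esub> y [^]\<^bsub>Q\<^esub> E"
      unfolding E_def a_def b_def using x y by (simp add: Q.nat_pow_pow)
    finally show "(x \<otimes>\<^bsub>Q\<^esub> y) [^]\<^bsub>Q\<^esub> E = x [^]\<^bsub>Q\<^esub> E \<otimes>\<^bsub>Q\<^esub> y [^]\<^bsub>Q\<^esub> E" .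
  qed
  have cT: "\<And>x. x \<in> carrier Q \<Longrightarrow> \<forall>q\<in>carrier Q. x [^]\<^bsub>Q\<^esub> E \<otimes>\<^bsub>Q\<^esub> q = q \<otimes>\<^bsub>Q\<^esub> x [^]\<^bsub>Q\<^esub> E"
  proof -
    fix x assume x: "x \<in> carrier Q"
    have "\<forall>q\<in>carrier Q. (x [^]\<^bsub>Q\<^esub> n) [^]\<^bsub>Q\<^esub> e \<otimes>\<^bsub>Q\<^esub> q = q \<otimes>\<^bsub>Q\<^esub> (x [^]\<^bsub>Q\<^esub> n) [^]\<^bsub>Q\<^esub> e"
      by (rule Q.central_pow[OF _ cpow[OF x]]) (use x in simp)
    then show "\<forall>q\<in>carrier Q. x [^]\<^bsub>Q\<^esub> E \<otimes>\<^bsub>Q\<^esub> q = q \<otimes>\<^bsub>Q\<^esub> x [^]\<^bsub>Q\<^esub> E"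
      unfolding E_def using x by (simp add: Q.nat_pow_pow)
  qed
  define Z where "Z = {q \<in> carrier Q. q [^]\<^bsub>Q\<^esub> E = \<one>\<^bsub>Q\<^esub>}"
  have sZ: "subgroup Z Q"
  proof (rule Q.subgroupI)
    show "Z \<subseteq> carrier Q" unfolding Z_def by blast
    have "\<one>\<^bsub>Q\<^esub> \<in> Z" unfolding Z_def by simp
    then show "Z \<noteq> {}" by blast
  next
    fix a assume "a \<in> Z"
    then show "inv\<^bsub>Q\<^esub> a \<in> Z" unfolding Z_def by (simp add: Q.nat_pow_inv)
  next
    fix a b assume "a \<in> Z" "b \<in> Z"
    then show "a \<otimes>\<^bsub>Q\<^esub> b \<in> Z" unfolding Z_def by (simp add: Thom)
  qed
  have comm1: "\<And>x y. x \<in> carrier Q \<Longrightarrow> y \<in> carrier Q \<Longrightarrow>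
     (x \<otimes>\<^bsub>Q\<^esub> y \<otimes>\<^bsub>Q\<^esub> inv\<^bsub>Q\<^esub> x \<otimes>\<^bsub>Q\<^esub> inv\<^bsub>Q\<^esub> y) [^]\<^bsub>Q\<^esub> E = \<one>\<^bsub>Q\<^esub>"
  proof -
    fix x y assume x: "x \<in> carrier Q" and y: "y \<in> carrier Q"
    define tx where "tx = x [^]\<^bsub>Q\<^esub> E"
    define ty where "ty = y [^]\<^bsub>Q\<^esub> E"
    have tc: "tx \<in> carrier Q" "ty \<in> carrier Q" unfolding tx_def ty_def using x y by simp_all
    have "(x \<otimes>\<^bsub>Q\<^esub> y \<otimes>\<^bsub>Q\<^esub> inv\<^bsub>Q\<^esub> x \<otimes>\<^bsub>Q\<^esub> inv\<^bsub>Q\<^esub> y) [^]\<^bsub>Q\<^esub> E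
        = tx \<otimes>\<^bsub>Q\<^esub> ty \<otimes>\<^bsub>Q\<^esub> inv\<^bsub>Q\<^esub> tx \<otimes>\<^bsub>Q\<^esub> inv\<^bsub>Q\<^esub> ty"
      unfolding tx_def ty_def using x y by (simp add: Thom Q.nat_pow_inv)
    also have "tx \<otimes>\<^bsub>Q\<^esub> ty = ty \<otimes>\<^bsub>Q\<^esub> tx" using cT[OF x] tc unfolding tx_def by simp
    also have "ty \<otimes>\<^bsub>Q\<^esub> tx \<otimes>\<^bsub>Q\<^esub> inv\<^bsub>Q\<^esub> tx \<otimes>\<^bsub>Q\<^esub> inv\<^bsub>Q\<^esub> ty = \<one>\<^bsub>Q\<^esub>"
      using tc by (simp add: Q.m_assoc)
    finally show "(x \<otimes>\<^bsub>Q\<^esub> y \<otimes>\<^bsub>Q\<^esub> inv\<^bsub>Q\<^esub> x \<otimes>\<^bsub>Q\<^esub> inv\<^bsub>Q\<^esub> y) [^]\<^bsub>Q\<^esub> E = \<one>\<^bsub>Q\<^esub>" .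
  qed
  have derZ: "\<And>r. r \<in> derived F (carrier F) \<Longrightarrow> \<pi> r \<in> Z"
  proof -
    fix r assume r: "r \<in> derived F (carrier F)"
    show "\<pi> r \<in> Z"
    proof (rule pi.generate_into[OF _ sZ _ r[unfolded derived_def]])
      show "derived_set F (carrier F) \<subseteq> carrier F"
      proof (rule subsetI)
        fix y assume "y \<in> derived_set F (carrier F)"
        then obtain a b where ab: "a \<in> carrier F" "b \<in> carrier F"
          "y = a \<otimes>\<^bsub>F\<^esub> b \<otimes>\<^bsub>F\<^esub> inv\<^bsub>F\<^esub> a \<otimes>\<^bsub>F\<^esub> inv\<^bsub>F\<^esub> b" by blast
        show "y \<in> carrier F" unfolding ab(3) using ab(1,2) by simp
      qed
    next
      fix y assume "y \<in> derived_set F (carrier F)"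
      then obtain a b where ab: "a \<in> carrier F" "b \<in> carrier F"
        "y = a \<otimes>\<^bsub>F\<^esub> b \<otimes>\<^bsub>F\<^esub> inv\<^bsub>F\<^esub> a \<otimes>\<^bsub>F\<^esub> inv\<^bsub>F\<^esub> b" by blast
      have "\<pi> y = \<pi> a \<otimes>\<^bsub>Q\<^esub> \<pi> b \<otimes>\<^bsub>Q\<^esub> inv\<^bsub>Q\<^esub> \<pi> a \<otimes>\<^bsub>Q\<^esub> inv\<^bsub>Q\<^esub> \<pi> b"
        unfolding ab(3) using ab(1,2) by simp
      then show "\<pi> y \<in> Z" unfolding Z_def using comm1[of "\<pi> a" "\<pi> b"] ab(1,2) by simp
    qed
  qed
  have sm: "schur_mult G = (F\<lparr>carrier := K \<inter> derived F (carrier F)\<rparr>) Mod N"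
    unfolding schur_mult_def hopf_mult_def F_def[symmetric] h_def[symmetric] K_def[symmetric] N_def[symmetric] ..
  show ?thesis
  proof
    fix Y0 assume Y0: "Y0 \<in> carrier (schur_mult G)"
    then obtain r where r: "r \<in> K \<inter> derived F (carrier F)" "Y0 = \<pi> r"
      unfolding sm FactGroup_def RCOSETS_def \<pi>_def r_coset_def by auto
    have "Y0 [^]\<^bsub>schur_mult G\<^esub> (n * e_nc n c) = Y0 [^]\<^bsub>Q\<^esub> E"
      unfolding sm Mod_pow_restrict Q_def E_def e_def ..
    also have "\<dots> = \<one>\<^bsub>Q\<^esub>" using derZ[of r] r unfolding Z_def by simp
    also have "\<dots> = \<one>\<^bsub>schur_mult G\<^esub>" unfolding sm Qone by (simp add: FactGroup_def)
    finally show "Y0 [^]\<^bsub>schur_mult G\<^esub> (n * e_nc n c) = \<one>\<^bsub>schur_mult G\<^esub>" .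
  qed
qed


end
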